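(* Let $\mathcal F\subseteq 2^{[n]}$ be a non-empty simply rooted family of sets such that $\emptyset\notin\mathcal F$. For $k\ge 1$ let $c_k$ be the number of sets $A\in\mathcal F$ with $|A|=k$ such that $[i,A]\subseteq\mathcal F$ for every $i\in A$, and let $c_0=1$. Then the Euler characteristic of $X(\mathcal F)$ equals $$1-\sum_{k=0}^n(-1)^k c_k.$$
   Context: $[n]=\{1,\dots,n\}$, $2^{[n]}$ its power set, $[A,B]=\{C\in 2^{[n]}: A\subseteq C\subseteq B\}$, $[i,A]=[\{i\},A]$. A family $\mathcal F\subseteq 2^{[n]}$ is simply rooted if for every non-empty $A\in\mathcal F$ there is $i\in A$ with $[i,A]\subseteq\mathcal F$. The set of cubes of $\mathcal F$ is $\mathcal C(\mathcal F)=\{[A,B]: A\subseteq B,\ [A,B]\subseteq\mathcal F\}$. For $A\subseteq B$, $|[A,B]|=I_1\times\dots\times I_n\subseteq\mathbb R^n$ with $I_i=\{1\}$ if $i\in A$, $I_i=[0,1]$ if $i\in B\setminus A$, $I_i=\{0\}$ if $i\notin B$. The geometric realization of $\mathcal F$ is the cubical set $X(\mathcal F)=\bigcup_{[A,B]\in\mathcal C(\mathcal F)}|[A,B]|$. The Euler characteristic is that of the cubical homology of $X(\mathcal F)$ (alternating sum of ranks of its cubical homology groups). *)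

theory Defs
  imports "HOL-Analysis.Analysis" "HOL-Library.Function_Algebras"
begin

definition set_interval :: "nat set \<Rightarrow> nat set \<Rightarrow> nat set set" where
  "set_interval A B = {C. A \<subseteq> C \<and> C \<subseteq> B}"

definition simply_rooted :: "nat set set \<Rightarrow> bool" where
  "simply_rooted F \<longleftrightarrow> (\<forall>A\<in>F. A \<noteq> {} \<longrightarrow> (\<exists>i\<in>A. set_interval {i} A \<subseteq> F))"

text \<open>Cubes of F: the pair (A,B) stands for the cube [A,B], whose geometric realization
  is the elementary cube |[A,B]| of dimension card (B - A).\<close>
definition cubes :: "nat set set \<Rightarrow> (nat set \<times> nat set) set" where
  "cubes F = {(A, B). A \<subseteq> B \<and> set_interval A B \<subseteq> F}"

definition cube_dim :: "nat set \<times> nat set \<Rightarrow> nat" where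
  "cube_dim Q = card (snd Q - fst Q)"

text \<open>Cubical boundary coefficient: for Q = |[A,B]| = I_1 x ... x I_n, the boundary is
  sum over free coordinates i (in increasing order, j-th free one has sign (-1)^j) of
  (face with I_i = {1}) - (face with I_i = {0}); the face with I_i={1} is [A \<union> {i}, B],
  the face with I_i = {0} is [A, B - {i}].\<close>
definition bd_coeff :: "nat set \<times> nat set \<Rightarrow> nat set \<times> nat set \<Rightarrow> real" where
  "bd_coeff Q P =
     (\<Sum>i\<in>snd Q - fst Q. (-1) ^ card {j\<in>snd Q - fst Q. j < i} *
        ((if P = (insert i (fst Q), snd Q) then 1 else 0)
       - (if P = (fst Q, snd Q - {i}) then 1 else 0)))"

text \<open>Cubical chains with real coefficients: finitely many cubes, so chains are functions
  from cubes to reals vanishing outside the cubes of the given dimension.\<close>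
definition chains :: "nat set set \<Rightarrow> nat \<Rightarrow> (nat set \<times> nat set \<Rightarrow> real) set" where
  "chains F k = {c. \<forall>Q. c Q \<noteq> 0 \<longrightarrow> Q \<in> cubes F \<and> cube_dim Q = k}"

definition boundary :: "nat set set \<Rightarrow> (nat set \<times> nat set \<Rightarrow> real) \<Rightarrow> (nat set \<times> nat set \<Rightarrow> real)" where
  "boundary F c = (\<lambda>P. \<Sum>Q\<in>cubes F. c Q * bd_coeff Q P)"

abbreviation fscale :: "real \<Rightarrow> ('a \<Rightarrow> real) \<Rightarrow> ('a \<Rightarrow> real)" where
  "fscale r f \<equiv> (\<lambda>x. r * f x)"

text \<open>Rank of the k-th cubical homology group (dimension of rational/real homology,
  which equals the rank of the integral homology):
  dim ker \<partial>_k - dim im \<partial>_{k+1}.\<close>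
definition homology_rank :: "nat set set \<Rightarrow> nat \<Rightarrow> int" where
  "homology_rank F k =
     int (vector_space.dim fscale {c \<in> chains F k. boundary F c = 0})
   - int (vector_space.dim fscale (boundary F ` chains F (Suc k)))"

text \<open>Euler characteristic of the cubical homology of X(F) (a subfamily of 2^[n], so all
  cubes have dimension at most n and homology vanishes above degree n).\<close>
definition euler_char :: "nat \<Rightarrow> nat set set \<Rightarrow> int" where
  "euler_char n F = (\<Sum>k=0..n. (-1) ^ k * homology_rank F k)"

end

theory Submission
  imports Defs
begin


type_synonym ch = "nat set \<times> nat set \<Rightarrow> real"

lemma vs_ch: "vector_space (fscale :: real \<Rightarrow> ch \<Rightarrow> ch)"
  by unfold_locales (auto simp: algebra_simps)

interpretation V: vector_space "fscale :: real \<Rightarrow> ch \<Rightarrow> ch"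
  by (rule vs_ch)

lemma rank_nullity:
  fixes f :: "ch \<Rightarrow> ch" and S W :: "ch set"
  assumes lin: "Vector_Spaces.linear fscale fscale f" and sub: "V.subspace S"
    and finW: "finite W" and SW: "S \<subseteq> V.span W"
  shows "V.dim S = V.dim {x\<in>S. f x = 0} + V.dim (f ` S)"
proof -
  interpret L: Vector_Spaces.linear fscale fscale f by (rule lin)
  define K where "K = {x\<in>S. f x = 0}"
  obtain BK where BK: "BK \<subseteq> K" "V.independent BK" "K \<subseteq> V.span BK" "card BK = V.dim K"
    using V.basis_exists by blast
  have "BK \<subseteq> S" using BK(1) K_def by auto
  then obtain B where B: "BK \<subseteq> B" "B \<subseteq> S" "V.independent B" "S \<subseteq> V.span B"
    using V.maximal_independent_subset_extend[OF _ BK(2)] by metis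
  have finB: "finite B"
    using V.independent_span_bound[OF finW B(3)] B(2) SW by blast
  have dimS: "V.dim S = card B"
    using V.basis_card_eq_dim[OF B(2) B(4) B(3)] by simp
  define C where "C = B - BK"
  have cardB: "card B = card BK + card C"
    unfolding C_def using finB B(1)
    by (metis card_Diff_subset finite_subset card_mono le_add_diff_inverse)
  have indC: "V.independent C"
    using B(3) C_def V.independent_mono by blast
  have spanC: "V.span C \<subseteq> S"
    using B(2) C_def V.span_minimal[OF _ sub] by blast
  have inj: "inj_on f (V.span C)"
  proof -
    have "x = 0" if x: "x \<in> V.span C" "f x = 0" for x
    proof -
      have xK: "x \<in> K" using x spanC K_def by auto
      hence xBK: "x \<in> V.span BK" using BK(3) by auto
      have xB: "x \<in> V.span B" using x(1) V.span_mono[of C B] C_def by auto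
      have r1: "V.representation B x = V.representation BK x"
        using V.representation_extend[OF B(3) xBK B(1)] .
      have r2: "V.representation B x = V.representation C x"
        using V.representation_extend[OF B(3) x(1)] C_def by auto
      have z: "V.representation B x b = 0" for b
        using r1 r2 V.representation_ne_zero[of BK x b] V.representation_ne_zero[of C x b] C_def
        by fastforce
      show "x = 0"
        using V.sum_nonzero_representation_eq[OF B(3) xB] z by simp
    qed
    thus ?thesis
      using L.inj_on_iff_eq_0[OF V.subspace_span] by blast
  qed
  have indfC: "V.independent (f ` C)"
    using L.independent_injective_image[OF indC inj] .
  have injC: "inj_on f C" using inj V.span_superset inj_on_subset by blast
  have "f ` S \<subseteq> V.span (f ` C)"
  proof
    fix y assume "y \<in> f ` S"
    then obtain x where x: "x \<in> S" "y = f x" by auto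
    have "y \<in> f ` V.span B" using x B(4) by auto
    hence "y \<in> V.span (f ` B)" using L.span_image by auto
    moreover have "f ` B \<subseteq> insert 0 (f ` C)"
      using BK(1) K_def C_def by auto
    ultimately have "y \<in> V.span (insert 0 (f ` C))" using V.span_mono by blast
    thus "y \<in> V.span (f ` C)" by simp
  qed
  moreover have "f ` C \<subseteq> f ` S" using C_def B(2) by auto
  ultimately have "V.dim (f ` S) = card (f ` C)"
    using V.basis_card_eq_dim[OF _ _ indfC] by simp
  also have "\<dots> = card C" using card_image[OF injC] .
  finally show ?thesis using dimS cardB BK(4) K_def by simp
qed



definition delta :: "nat set \<times> nat set \<Rightarrow> ch" where
  "delta Q = (\<lambda>P. if P = Q then 1 else 0)"

lemma cubes_sub: "F \<subseteq> Pow {1..n} \<Longrightarrow> cubes F \<subseteq> Pow {1..n} \<times> Pow {1..n}"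
proof
  fix Q assume F: "F \<subseteq> Pow {1..n}" and Q: "Q \<in> cubes F"
  obtain A B where AB: "Q = (A, B)" by (cases Q)
  have "A \<subseteq> B" "set_interval A B \<subseteq> F" using Q AB by (auto simp: cubes_def)
  moreover have "B \<in> set_interval A B" using \<open>A \<subseteq> B\<close> by (simp add: set_interval_def)
  ultimately have "B \<in> F" "A \<subseteq> B" by auto
  hence "B \<subseteq> {1..n}" "A \<subseteq> {1..n}" using F by auto
  thus "Q \<in> Pow {1..n} \<times> Pow {1..n}" using AB by simp
qed

lemma finite_cubes: "F \<subseteq> Pow {1..n} \<Longrightarrow> finite (cubes F)"
  by (rule finite_subset[OF cubes_sub]) auto

lemma cube_dim_le: "F \<subseteq> Pow {1..n} \<Longrightarrow> Q \<in> cubes F \<Longrightarrow> cube_dim Q \<le> n"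
proof -
  assume F: "F \<subseteq> Pow {1..n}" and Q: "Q \<in> cubes F"
  have "snd Q \<subseteq> {1..n}" using subsetD[OF cubes_sub[OF F] Q] by (auto simp: mem_Times_iff)
  hence "snd Q - fst Q \<subseteq> {1..n}" by auto
  hence "card (snd Q - fst Q) \<le> card {1..n}" by (rule card_mono[rotated]) simp
  thus ?thesis by (simp add: cube_dim_def)
qed

lemma lin_boundary: "Vector_Spaces.linear fscale fscale (boundary F)"
  unfolding Vector_Spaces.linear_iff
proof (intro conjI allI vs_ch)
  fix x y :: ch
  show "boundary F (x + y) = boundary F x + boundary F y"
    unfolding boundary_def by (rule ext) (simp add: distrib_right sum.distrib)
next
  fix r :: real and x :: ch
  show "boundary F (fscale r x) = fscale r (boundary F x)"
    unfolding boundary_def by (rule ext) (simp add: sum_distrib_left mult.assoc)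
qed

lemma chainsD: "c \<in> chains F k \<Longrightarrow> c Q \<noteq> 0 \<Longrightarrow> Q \<in> cubes F \<and> cube_dim Q = k"
  unfolding chains_def by blast

lemma chainsI: "(\<And>Q. c Q \<noteq> 0 \<Longrightarrow> Q \<in> cubes F \<and> cube_dim Q = k) \<Longrightarrow> c \<in> chains F k"
  unfolding chains_def by blast

lemma subspace_chains: "V.subspace (chains F k)"
  unfolding V.subspace_def
proof (intro conjI ballI allI)
  show "0 \<in> chains F k" by (rule chainsI) simp
  fix x y assume x: "x \<in> chains F k" and y: "y \<in> chains F k"
  show "x + y \<in> chains F k"
  proof (rule chainsI)
    fix Q assume "(x + y) Q \<noteq> 0"
    hence "x Q \<noteq> 0 \<or> y Q \<noteq> 0" by auto
    thus "Q \<in> cubes F \<and> cube_dim Q = k" using chainsD[OF x] chainsD[OF y] by blast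
  qed
next
  fix x :: ch and r :: real assume x: "x \<in> chains F k"
  show "fscale r x \<in> chains F k"
    by (rule chainsI) (use chainsD[OF x] in auto)
qed

lemma chains_span:
  assumes F: "F \<subseteq> Pow {1..n}"
  shows "chains F k \<subseteq> V.span (delta ` {Q\<in>cubes F. cube_dim Q = k})"
proof
  fix c assume c: "c \<in> chains F k"
  let ?S = "{Q\<in>cubes F. cube_dim Q = k}"
  have fin: "finite ?S" using finite_cubes[OF F] by auto
  have "c = (\<Sum>Q\<in>?S. fscale (c Q) (delta Q))"
  proof
    fix P
    have "(\<Sum>Q\<in>?S. fscale (c Q) (delta Q)) P = (\<Sum>Q\<in>?S. c Q * delta Q P)"
      by (induct rule: finite_induct[OF fin]) auto
    also have "\<dots> = (if P \<in> ?S then c P else 0)"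
      by (simp add: delta_def fin if_distrib[of "\<lambda>x. _ * x"] cong: if_cong)
    also have "\<dots> = c P" using chainsD[OF c, of P] by auto
    finally show "c P = (\<Sum>Q\<in>?S. fscale (c Q) (delta Q)) P" by simp
  qed
  also have "\<dots> \<in> V.span (delta ` ?S)"
    by (intro V.span_sum V.span_scale V.span_base) auto
  finally show "c \<in> V.span (delta ` ?S)" .
qed

lemma delta_indep:
  assumes fin: "finite S"
  shows "V.independent (delta ` S)"
proof (rule V.independent_if_scalars_zero)
  show "finite (delta ` S)" using fin by simp
  fix g x assume s: "(\<Sum>x\<in>delta ` S. fscale (g x) x) = 0" and x: "x \<in> delta ` S"
  then obtain Q where Q: "Q \<in> S" "x = delta Q" by auto
  have inj: "inj_on delta S" by (auto simp: inj_on_def delta_def fun_eq_iff split: if_splits)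
  have "0 = (\<Sum>x\<in>delta ` S. fscale (g x) x) Q" using s by simp
  also have "\<dots> = (\<Sum>y\<in>delta ` S. g y * y Q)"
    by (induct rule: finite_induct[OF finite_imageI[OF fin]]) auto
  also have "\<dots> = (\<Sum>P\<in>S. g (delta P) * delta P Q)"
    by (simp add: sum.reindex[OF inj])
  also have "\<dots> = g (delta Q)"
    using Q fin by (simp add: delta_def if_distrib[of "\<lambda>x. _ * x"] cong: if_cong)
  finally show "g x = 0" using Q by simp
qed

lemma dim_chains:
  assumes F: "F \<subseteq> Pow {1..n}"
  shows "V.dim (chains F k) = card {Q\<in>cubes F. cube_dim Q = k}"
proof -
  let ?S = "{Q\<in>cubes F. cube_dim Q = k}"
  have fin: "finite ?S" using finite_cubes[OF F] by auto
  have inj: "inj_on delta ?S" by (auto simp: inj_on_def delta_def fun_eq_iff split: if_splits)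
  have sub: "delta ` ?S \<subseteq> chains F k"
  proof
    fix x assume "x \<in> delta ` ?S"
    then obtain Q where Q: "Q \<in> ?S" "x = delta Q" by auto
    show "x \<in> chains F k"
      by (rule chainsI) (use Q in \<open>auto simp: delta_def split: if_splits\<close>)
  qed
  have "card (delta ` ?S) = V.dim (chains F k)"
    by (rule V.basis_card_eq_dim[OF sub chains_span[OF F] delta_indep[OF fin]])
  thus ?thesis using card_image[OF inj] by simp
qed

lemma boundary_chains0: "F \<subseteq> Pow {1..n} \<Longrightarrow> c \<in> chains F 0 \<Longrightarrow> boundary F c = 0"
proof -
  assume F: "F \<subseteq> Pow {1..n}" and c: "c \<in> chains F 0"
  have "c Q * bd_coeff Q P = 0" if "Q \<in> cubes F" for Q P
  proof (cases "c Q = 0")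
    case False
    hence "Q \<in> cubes F" "card (snd Q - fst Q) = 0" using chainsD[OF c, of Q] by (auto simp: cube_dim_def)
    moreover have "snd Q \<subseteq> {1..n}" using subsetD[OF cubes_sub[OF F] \<open>Q \<in> cubes F\<close>] by (simp add: mem_Times_iff)
    hence "finite (snd Q)" using finite_subset by blast
    ultimately have e: "snd Q - fst Q = {}" by auto
    have "bd_coeff Q P = 0" unfolding bd_coeff_def e by simp
    thus ?thesis by simp
  qed simp
  hence "\<And>P. (\<Sum>Q\<in>cubes F. c Q * bd_coeff Q P) = 0" by (intro sum.neutral) blast
  thus ?thesis unfolding boundary_def by (intro ext) simp
qed



lemma pow_alt_sum:
  assumes "finite X"
  shows "(\<Sum>A\<in>Pow X. (-1::int) ^ card A) = (if X = {} then 1 else 0)"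
  using assms
proof (induction X rule: finite_induct)
  case empty
  then show ?case by simp
next
  case (insert x X)
  have inj: "inj_on (insert x) (Pow X)"
  proof (rule inj_onI)
    fix A A' assume "A \<in> Pow X" "A' \<in> Pow X" and eq: "insert x A = insert x A'"
    hence "x \<notin> A" "x \<notin> A'" using insert.hyps(2) by auto
    thus "A = A'" using eq by (metis Diff_insert_absorb)
  qed
  have disj: "Pow X \<inter> insert x ` Pow X = {}" using insert.hyps(2) by auto
  have fin: "finite (Pow X)" using insert.hyps(1) by simp
  have "(\<Sum>A\<in>insert x ` Pow X. (-1::int) ^ card A) = (\<Sum>A\<in>Pow X. (-1::int) ^ card (insert x A))"
    by (simp add: sum.reindex[OF inj])
  also have "\<dots> = (\<Sum>A\<in>Pow X. - ((-1::int) ^ card A))"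
  proof (rule sum.cong[OF refl])
    fix A assume "A \<in> Pow X"
    hence "finite A" "x \<notin> A" using insert.hyps finite_subset by auto
    thus "(-1::int) ^ card (insert x A) = - ((-1) ^ card A)" by simp
  qed
  finally have e: "(\<Sum>A\<in>insert x ` Pow X. (-1::int) ^ card A) = - (\<Sum>A\<in>Pow X. (-1::int) ^ card A)"
    by (simp add: sum_negf)
  have "(\<Sum>A\<in>Pow (insert x X). (-1::int) ^ card A)
      = (\<Sum>A\<in>Pow X. (-1::int) ^ card A) + (\<Sum>A\<in>insert x ` Pow X. (-1::int) ^ card A)"
    unfolding Pow_insert by (rule sum.union_disjoint) (use fin disj in auto)
  then show ?case using e by simp
qed

lemma interval_root_sum:
  assumes "finite B" "r \<in> B"
  shows "(\<Sum>A\<in>set_interval {r} B. (-1::int) ^ card A) = (if B - {r} = {} then -1 else 0)"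
proof -
  have eq: "set_interval {r} B = insert r ` Pow (B - {r})"
  proof
    show "set_interval {r} B \<subseteq> insert r ` Pow (B - {r})"
    proof
      fix C assume C: "C \<in> set_interval {r} B"
      hence "r \<in> C" "C \<subseteq> B" by (auto simp: set_interval_def)
      hence "C = insert r (C - {r})" "C - {r} \<in> Pow (B - {r})" by auto
      thus "C \<in> insert r ` Pow (B - {r})" by (rule image_eqI)
    qed
    show "insert r ` Pow (B - {r}) \<subseteq> set_interval {r} B"
      using assms(2) by (auto simp: set_interval_def)
  qed
  have inj: "inj_on (insert r) (Pow (B - {r}))"
  proof (rule inj_onI)
    fix A A' assume "A \<in> Pow (B - {r})" "A' \<in> Pow (B - {r})" and eq: "insert r A = insert r A'"
    hence "r \<notin> A" "r \<notin> A'" by auto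
    thus "A = A'" using eq by (metis Diff_insert_absorb)
  qed
  have "(\<Sum>A\<in>set_interval {r} B. (-1::int) ^ card A) = (\<Sum>A\<in>Pow (B - {r}). (-1::int) ^ card (insert r A))"
    by (simp add: eq sum.reindex[OF inj])
  also have "\<dots> = (\<Sum>A\<in>Pow (B - {r}). - ((-1::int) ^ card A))"
  proof (rule sum.cong[OF refl])
    fix A assume "A \<in> Pow (B - {r})"
    hence "finite A" "r \<notin> A" using assms(1) finite_subset by auto
    thus "(-1::int) ^ card (insert r A) = - ((-1) ^ card A)" by simp
  qed
  also have "\<dots> = - (if B - {r} = {} then 1 else 0)"
    using pow_alt_sum[of "B - {r}"] assms(1) by (simp add: sum_negf)
  finally show ?thesis by simp
qed

definition UB :: "nat set set \<Rightarrow> nat set \<Rightarrow> nat set set" where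
  "UB F B = {A. A \<subseteq> B \<and> set_interval A B \<subseteq> F}"

definition full :: "nat set set \<Rightarrow> nat set \<Rightarrow> bool" where
  "full F B \<longleftrightarrow> (\<forall>i\<in>B. set_interval {i} B \<subseteq> F)"

lemma key:
  assumes sr: "simply_rooted F" and e: "{} \<notin> F" and fin: "finite B"
  shows "(\<Sum>A\<in>UB F B. (-1::int) ^ card A) = (if B \<in> F \<and> full F B then -1 else 0)"
  using fin
proof (induction "card B" arbitrary: B rule: less_induct)
  case less
  show ?case
  proof (cases "B \<in> F")
    case False
    have "UB F B = {}"
    proof -
      have "A \<notin> UB F B" for A
      proof
        assume "A \<in> UB F B"
        hence "A \<subseteq> B" "set_interval A B \<subseteq> F" by (auto simp: UB_def)
        moreover have "B \<in> set_interval A B" using \<open>A \<subseteq> B\<close> by (simp add: set_interval_def)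
        ultimately show False using False by blast
      qed
      thus ?thesis by blast
    qed
    thus ?thesis using False by simp
  next
    case True
    hence "B \<noteq> {}" using e by auto
    then obtain r where r: "r \<in> B" "set_interval {r} B \<subseteq> F"
      using sr True unfolding simply_rooted_def by blast
    have split: "UB F B = set_interval {r} B \<union> UB F (B - {r})"
    proof (rule set_eqI)
      fix A
      show "A \<in> UB F B \<longleftrightarrow> A \<in> set_interval {r} B \<union> UB F (B - {r})"
      proof
        assume A: "A \<in> UB F B"
        show "A \<in> set_interval {r} B \<union> UB F (B - {r})"
        proof (cases "r \<in> A")
          case True
          thus ?thesis using A by (auto simp: UB_def set_interval_def)
        next
          case False
          have "set_interval A (B - {r}) \<subseteq> set_interval A B" by (auto simp: set_interval_def)
          thus ?thesis using A False by (auto simp: UB_def)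
        qed
      next
        assume A: "A \<in> set_interval {r} B \<union> UB F (B - {r})"
        show "A \<in> UB F B"
        proof (cases "A \<in> set_interval {r} B")
          case True
          hence "set_interval A B \<subseteq> set_interval {r} B" by (auto simp: set_interval_def)
          thus ?thesis using True r(2) by (auto simp: UB_def set_interval_def)
        next
          case False
          hence A2: "A \<subseteq> B - {r}" "set_interval A (B - {r}) \<subseteq> F" using A by (auto simp: UB_def)
          have "C \<in> F" if "C \<in> set_interval A B" for C
          proof (cases "r \<in> C")
            case True
            thus ?thesis using that r(2) by (auto simp: set_interval_def)
          next
            case False
            thus ?thesis using that A2(2) by (auto simp: set_interval_def)
          qed
          thus ?thesis using A2(1) by (auto simp: UB_def)
        qed
      qed
    qed
    have disj: "set_interval {r} B \<inter> UB F (B - {r}) = {}"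
      by (auto simp: set_interval_def UB_def)
    have finU: "finite (UB F (B - {r}))"
      by (rule finite_subset[of _ "Pow B"]) (use less.prems in \<open>auto simp: UB_def\<close>)
    have finI: "finite (set_interval {r} B)"
      by (rule finite_subset[of _ "Pow B"]) (use less.prems in \<open>auto simp: set_interval_def\<close>)
    have s: "(\<Sum>A\<in>UB F B. (-1::int) ^ card A)
        = (if B - {r} = {} then -1 else 0) + (\<Sum>A\<in>UB F (B - {r}). (-1::int) ^ card A)"
      unfolding split sum.union_disjoint[OF finI finU disj]
      using interval_root_sum[OF less.prems r(1)] by simp
    have IH: "(\<Sum>A\<in>UB F (B - {r}). (-1::int) ^ card A)
        = (if B - {r} \<in> F \<and> full F (B - {r}) then -1 else 0)"
    proof -
      have "card (B - {r}) < card B" by (rule card_Diff1_less[OF less.prems r(1)])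
      moreover have "finite (B - {r})" using less.prems by simp
      ultimately show ?thesis by (rule less.hyps)
    qed
    show ?thesis
    proof (cases "B - {r} = {}")
      case True
      hence "B = {r}" using r(1) by auto
      thus ?thesis using s IH True e r(2) \<open>B \<in> F\<close> by (simp add: full_def)
    next
      case False
      have "(B - {r} \<in> F \<and> full F (B - {r})) \<longleftrightarrow> full F B"
      proof
        assume h: "B - {r} \<in> F \<and> full F (B - {r})"
        show "full F B" unfolding full_def
        proof
          fix i assume i: "i \<in> B"
          show "set_interval {i} B \<subseteq> F"
          proof (cases "i = r")
            case True thus ?thesis using r(2) by simp
          next
            case False
            hence "i \<in> B - {r}" using i by auto
            hence h2: "set_interval {i} (B - {r}) \<subseteq> F" using h by (auto simp: full_def)
            show ?thesis
            proof
              fix C assume C: "C \<in> set_interval {i} B"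
              show "C \<in> F"
              proof (cases "r \<in> C")
                case True thus ?thesis using C r(2) by (auto simp: set_interval_def)
              next
                case False thus ?thesis using C h2 by (auto simp: set_interval_def)
              qed
            qed
          qed
        qed
      next
        assume h: "full F B"
        obtain j where j: "j \<in> B - {r}" using False by auto
        have "B - {r} \<in> set_interval {j} B" using j by (auto simp: set_interval_def)
        hence "B - {r} \<in> F" using h j by (auto simp: full_def)
        moreover have "full F (B - {r})" unfolding full_def
        proof
          fix i assume "i \<in> B - {r}"
          hence "set_interval {i} B \<subseteq> F" using h by (auto simp: full_def)
          moreover have "set_interval {i} (B - {r}) \<subseteq> set_interval {i} B" by (auto simp: set_interval_def)
          ultimately show "set_interval {i} (B - {r}) \<subseteq> F" by blast
        qed
        ultimately show "B - {r} \<in> F \<and> full F (B - {r})" by blast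
      qed
      thus ?thesis using s IH False \<open>B \<in> F\<close> by simp
    qed
  qed
qed



lemma telescope:
  fixes m ker im :: "nat \<Rightarrow> int"
  assumes "\<And>k. m k = ker k + im k" "im 0 = 0"
  shows "(\<Sum>k=0..N. (-1)^k * (ker k - im (Suc k))) = (\<Sum>k=0..N. (-1)^k * m k) - (-1)^N * im (Suc N)"
proof (induction N)
  case 0
  then show ?case using assms by simp
next
  case (Suc N)
  show ?case using Suc assms(1)[of "Suc N"] assms(2) by (simp add: algebra_simps)
qed

lemma dim_zero: "V.dim {0} = 0"
  using V.basis_card_eq_dim[of "{}" "{0}"] V.independent_empty by (simp add: V.span_zero)

lemma euler_cubes:
  assumes F: "F \<subseteq> Pow {1..n}"
  shows "euler_char n F = (\<Sum>k=0..n. (-1)^k * int (card {Q\<in>cubes F. cube_dim Q = k}))"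
proof -
  define m where "m k = int (card {Q\<in>cubes F. cube_dim Q = k})" for k
  define ker where "ker k = int (V.dim {c \<in> chains F k. boundary F c = 0})" for k
  define im where "im k = int (V.dim (boundary F ` chains F k))" for k
  have rn: "m k = ker k + im k" for k
  proof -
    have fin: "finite (delta ` {Q\<in>cubes F. cube_dim Q = k})" using finite_cubes[OF F] by simp
    show ?thesis
      using rank_nullity[OF lin_boundary[of F] subspace_chains fin chains_span[OF F]] dim_chains[OF F]
      unfolding m_def ker_def im_def by simp
  qed
  have z0: "0 \<in> chains F k" for k by (rule chainsI) simp
  have im0: "im 0 = 0"
  proof -
    have "boundary F ` chains F 0 = {0}"
    proof
      show "boundary F ` chains F 0 \<subseteq> {0}" using boundary_chains0[OF F] by auto
      have "boundary F 0 = 0" using boundary_chains0[OF F z0] .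
      hence "0 \<in> boundary F ` chains F 0" using z0[of 0] by (metis image_eqI)
      thus "{0} \<subseteq> boundary F ` chains F 0" by simp
    qed
    thus ?thesis unfolding im_def using dim_zero by simp
  qed
  have imN: "im (Suc n) = 0"
  proof -
    have "chains F (Suc n) = {0}"
    proof
      show "chains F (Suc n) \<subseteq> {0}"
      proof
        fix c assume c: "c \<in> chains F (Suc n)"
        have "c Q = 0" for Q
        proof (rule ccontr)
          assume "c Q \<noteq> 0"
          hence "Q \<in> cubes F" "cube_dim Q = Suc n" using chainsD[OF c] by auto
          thus False using cube_dim_le[OF F, of Q] by simp
        qed
        thus "c \<in> {0}" by (auto simp: fun_eq_iff)
      qed
      show "{0} \<subseteq> chains F (Suc n)" using z0 by simp
    qed
    moreover have "boundary F 0 = 0" by (simp add: boundary_def fun_eq_iff)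
    ultimately have "boundary F ` chains F (Suc n) = {0}" by simp
    thus ?thesis unfolding im_def using dim_zero by simp
  qed
  have "euler_char n F = (\<Sum>k=0..n. (-1)^k * (ker k - im (Suc k)))"
    unfolding euler_char_def homology_rank_def ker_def im_def by simp
  also have "\<dots> = (\<Sum>k=0..n. (-1)^k * m k)"
    using telescope[of m ker im n, OF rn im0] imN by simp
  finally show ?thesis unfolding m_def .
qed


lemma neg_pow_diff: "a \<le> b \<Longrightarrow> (-1::int) ^ (b - a) = (-1) ^ b * (-1) ^ a"
proof -
  assume "a \<le> b"
  then obtain d where b: "b = a + d" using le_Suc_ex by blast
  have "(-1::int) ^ b * (-1) ^ a = (-1) ^ d * ((-1) ^ a * (-1) ^ a)"
    unfolding b power_add by (simp add: algebra_simps)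
  also have "(-1::int) ^ a * (-1) ^ a = 1" by (simp flip: power_add)
  finally show ?thesis using b by simp
qed

lemma cube_sum:
  assumes F: "F \<subseteq> Pow {1..n}" and sr: "simply_rooted F" and e: "{} \<notin> F"
  shows "(\<Sum>k=0..n. (-1)^k * int (card {Q\<in>cubes F. cube_dim Q = k}))
       = - (\<Sum>k=1..n. (-1)^k * int (card {A \<in> F. card A = k \<and> (\<forall>i\<in>A. set_interval {i} A \<subseteq> F)}))"
proof -
  let ?h = "\<lambda>Q. (-1::int) ^ cube_dim Q"
  have finC: "finite (cubes F)" using finite_cubes[OF F] .
  have finF: "finite F" using F by (rule finite_subset) simp
  have finB: "finite B" if "B \<in> F" for B using that F finite_subset by (metis PowD finite_atLeastAtMost subsetD)
  have "(\<Sum>k=0..n. (-1)^k * int (card {Q\<in>cubes F. cube_dim Q = k}))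
      = (\<Sum>k=0..n. (\<Sum>Q\<in>{Q\<in>cubes F. cube_dim Q = k}. ?h Q))"
    by (rule sum.cong[OF refl]) simp
  also have "\<dots> = (\<Sum>Q\<in>cubes F. ?h Q)"
    by (rule sum.group[OF finC]) (use cube_dim_le[OF F] in auto)
  also have "\<dots> = (\<Sum>B\<in>F. (\<Sum>Q\<in>{Q\<in>cubes F. snd Q = B}. ?h Q))"
  proof (rule sum.group[OF finC finF, symmetric])
    show "snd ` cubes F \<subseteq> F"
    proof
      fix B assume "B \<in> snd ` cubes F"
      then obtain A where "(A, B) \<in> cubes F" by force
      hence "A \<subseteq> B" "set_interval A B \<subseteq> F" by (auto simp: cubes_def)
      moreover have "B \<in> set_interval A B" using \<open>A \<subseteq> B\<close> by (simp add: set_interval_def)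
      ultimately show "B \<in> F" by blast
    qed
  qed
  also have "\<dots> = (\<Sum>B\<in>F. (-1) ^ card B * (\<Sum>A\<in>UB F B. (-1::int) ^ card A))"
  proof (rule sum.cong[OF refl])
    fix B assume B: "B \<in> F"
    have eq: "{Q\<in>cubes F. snd Q = B} = (\<lambda>A. (A, B)) ` UB F B"
      by (auto simp: cubes_def UB_def)
    have inj: "inj_on (\<lambda>A. (A, B)) (UB F B)" by (auto simp: inj_on_def)
    have "(\<Sum>Q\<in>{Q\<in>cubes F. snd Q = B}. ?h Q) = (\<Sum>A\<in>UB F B. (-1::int) ^ card (B - A))"
      unfolding eq by (simp add: sum.reindex[OF inj] cube_dim_def)
    also have "\<dots> = (\<Sum>A\<in>UB F B. (-1) ^ card B * (-1::int) ^ card A)"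
    proof (rule sum.cong[OF refl])
      fix A assume "A \<in> UB F B"
      hence AB: "A \<subseteq> B" by (auto simp: UB_def)
      have "card (B - A) = card B - card A" using finB[OF B] AB by (simp add: card_Diff_subset finite_subset)
      moreover have "card A \<le> card B" using finB[OF B] AB by (simp add: card_mono)
      ultimately show "(-1::int) ^ card (B - A) = (-1) ^ card B * (-1) ^ card A"
        using neg_pow_diff by simp
    qed
    finally show "(\<Sum>Q\<in>{Q\<in>cubes F. snd Q = B}. ?h Q) = (-1) ^ card B * (\<Sum>A\<in>UB F B. (-1::int) ^ card A)"
      by (simp add: sum_distrib_left)
  qed
  also have "\<dots> = (\<Sum>B\<in>F. (if full F B then - ((-1::int) ^ card B) else 0))"
    by (rule sum.cong[OF refl]) (simp add: key[OF sr e finB])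
  also have "\<dots> = - (\<Sum>B\<in>{B\<in>F. full F B}. (-1::int) ^ card B)"
    by (simp add: sum.inter_filter[OF finF, symmetric] sum_negf if_distrib cong: if_cong)
  also have "(\<Sum>B\<in>{B\<in>F. full F B}. (-1::int) ^ card B)
      = (\<Sum>k=1..n. (\<Sum>B\<in>{B\<in>{B\<in>F. full F B}. card B = k}. (-1::int) ^ card B))"
  proof (rule sum.group[symmetric])
    show "finite {B\<in>F. full F B}" using finF by simp
    show "finite {1..n}" by simp
    show "card ` {B\<in>F. full F B} \<subseteq> {1..n}"
    proof
      fix k assume "k \<in> card ` {B\<in>F. full F B}"
      then obtain B where B: "B \<in> F" "k = card B" by auto
      have "B \<noteq> {}" using B e by auto
      hence "card B \<ge> 1" using finB[OF B(1)] by (simp add: Suc_le_eq card_gt_0_iff)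
      moreover have "card B \<le> card {1..n}" using B F by (intro card_mono) auto
      ultimately show "k \<in> {1..n}" using B by simp
    qed
  qed
  also have "\<dots> = (\<Sum>k=1..n. (-1)^k * int (card {A \<in> F. card A = k \<and> (\<forall>i\<in>A. set_interval {i} A \<subseteq> F)}))"
  proof (rule sum.cong[OF refl])
    fix k
    have "{B\<in>{B\<in>F. full F B}. card B = k} = {A \<in> F. card A = k \<and> (\<forall>i\<in>A. set_interval {i} A \<subseteq> F)}"
      by (auto simp: full_def)
    thus "(\<Sum>B\<in>{B\<in>{B\<in>F. full F B}. card B = k}. (-1::int) ^ card B)
        = (-1)^k * int (card {A \<in> F. card A = k \<and> (\<forall>i\<in>A. set_interval {i} A \<subseteq> F)})"
      by simp
  qed
  finally show ?thesis .
qed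

theorem corollary2:
  fixes n :: nat and F :: "nat set set" and c :: "nat \<Rightarrow> int"
  assumes "F \<subseteq> Pow {1..n}"
    and "F \<noteq> {}"
    and "simply_rooted F"
    and "{} \<notin> F"
    and "\<And>k. k \<ge> 1 \<Longrightarrow> c k = int (card {A \<in> F. card A = k \<and> (\<forall>i\<in>A. set_interval {i} A \<subseteq> F)})"
    and "c 0 = 1"
  shows "euler_char n F = 1 - (\<Sum>k=0..n. (-1) ^ k * c k)"
proof -
  have "(\<Sum>k=0..n. (-1) ^ k * c k) = c 0 + (\<Sum>k=Suc 0..n. (-1) ^ k * c k)"
    by (simp add: sum.atLeast_Suc_atMost)
  also have "(\<Sum>k=Suc 0..n. (-1) ^ k * c k)
     = (\<Sum>k=1..n. (-1)^k * int (card {A \<in> F. card A = k \<and> (\<forall>i\<in>A. set_interval {i} A \<subseteq> F)}))"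
    by (rule sum.cong) (use assms(5) in auto)
  finally show ?thesis
    using euler_cubes[OF assms(1)] cube_sum[OF assms(1) assms(3) assms(4)] assms(6) by simp
qed

end
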